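(* Let $d\ge0$ and $\alpha_{d+1}>0$. For the Gaussian broadcast model on $P=\mathcal{HS}_{d+1}$, local reconstruction is possible if and only if single-vertex reconstruction is possible.
   Context: Gaussian broadcast model: Let $d\ge 0$ and let $P$ be an infinite graded poset with layers $L_0,L_1,\dots$ ($L_t$ = elements of rank $t$, $L_0$ = minimal elements), in which every element covers at most $d+1$ elements. For $v\in P$ let $\mathfrak p(v)$ be the set of elements covered by $v$. Given $\alpha_1,\dots,\alpha_{d+1}>0$, let $X_0\sim\mathcal N(0,1)$ and, independently, let $W_{u\to v}$ be i.i.d. $\mathcal N(0,1)$ indexed by covering pairs $u\lessdot v$. Set $X_v=X_0$ for $v\in L_0$, and for $v$ of rank $\ge1$ set $X_v=\alpha_{|\mathfrak p(v)|}\sum_{u\in\mathfrak p(v)}(X_u+W_{u\to v})$. Infinite model: $\mathcal{HS}_{d+1}=\{(x_1,\dots,x_{d+1})\in\mathbb Z^{d+1}: x_1+\dots+x_{d+1}\ge0\}$ with $u\le v$ iff $v-u\in\mathbb Z_{\ge0}^{d+1}$; $L_t$ is the set of points with coordinate sum $t$; every element of rank $\ge1$ covers exactly $d+1$ elements. A window of width $N$ is a set $\big([x_1,x_1+N)\times\cdots\times[x_{d+1},x_{d+1}+N)\big)\cap P$ with $x_i\in\mathbb Z$. Local reconstruction is possible if there exist a finite $N$, windows $\mathcal W_t$ ($t\ge0$) of width $N$, and $c:P\to\mathbb R$ with $c|_{L_t}$ supported on $\mathcal W_t$, such that $\zeta_t:=\sum_{u\in L_t}c_uX_u$ satisfies $\operatorname{Var}(\zeta_t)>0$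 for all $t$ and $\operatorname{corr}(\zeta_t,X_0)$ does not converge to $0$ as $t\to\infty$. Single-vertex reconstruction is possible if this can be done with $N=1$. *)

theory Defs
  imports "HOL-Probability.Probability"
begin

text \<open>Points of Z^(d+1) are represented as functions nat => int vanishing outside {0..d}
  (coordinates x_1..x_(d+1) are x 0 .. x d).\<close>

definition HS :: "nat \<Rightarrow> (nat \<Rightarrow> int) set" where
  "HS d = {x. (\<forall>i>d. x i = 0) \<and> (\<Sum>i\<le>d. x i) \<ge> 0}"

definition rank :: "nat \<Rightarrow> (nat \<Rightarrow> int) \<Rightarrow> int" where
  "rank d x = (\<Sum>i\<le>d. x i)"

definition layer :: "nat \<Rightarrow> nat \<Rightarrow> (nat \<Rightarrow> int) set" where
  "layer d t = {x \<in> HS d. rank d x = int t}"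

definition unitv :: "nat \<Rightarrow> nat \<Rightarrow> int" where
  "unitv i = (\<lambda>j. if j = i then 1 else 0)"

definition covers :: "nat \<Rightarrow> (nat \<Rightarrow> int) \<Rightarrow> (nat \<Rightarrow> int) \<Rightarrow> bool" where
  "covers d u v \<longleftrightarrow> u \<in> HS d \<and> v \<in> HS d \<and> (\<exists>i\<le>d. v = (\<lambda>j. u j + unitv i j))"

definition parents :: "nat \<Rightarrow> (nat \<Rightarrow> int) \<Rightarrow> (nat \<Rightarrow> int) set" where
  "parents d v = {u. covers d u v}"

definition covpairs :: "nat \<Rightarrow> ((nat \<Rightarrow> int) \<times> (nat \<Rightarrow> int)) set" where
  "covpairs d = {(u, v). covers d u v}"

primrec Xr :: "nat \<Rightarrow> (nat \<Rightarrow> real) \<Rightarrow> ('a \<Rightarrow> real)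
    \<Rightarrow> ((nat \<Rightarrow> int) \<times> (nat \<Rightarrow> int) \<Rightarrow> 'a \<Rightarrow> real) \<Rightarrow> nat \<Rightarrow> (nat \<Rightarrow> int) \<Rightarrow> 'a \<Rightarrow> real" where
  "Xr d \<alpha> X0 W 0 v = X0"
| "Xr d \<alpha> X0 W (Suc t) v =
     (\<lambda>\<omega>. \<alpha> (card (parents d v)) * (\<Sum>u\<in>parents d v. Xr d \<alpha> X0 W t u \<omega> + W (u, v) \<omega>))"

definition Xv :: "nat \<Rightarrow> (nat \<Rightarrow> real) \<Rightarrow> ('a \<Rightarrow> real)
    \<Rightarrow> ((nat \<Rightarrow> int) \<times> (nat \<Rightarrow> int) \<Rightarrow> 'a \<Rightarrow> real) \<Rightarrow> (nat \<Rightarrow> int) \<Rightarrow> 'a \<Rightarrow> real" where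
  "Xv d \<alpha> X0 W v = Xr d \<alpha> X0 W (nat (rank d v)) v"

definition gaussian_model :: "'a measure \<Rightarrow> nat \<Rightarrow> ('a \<Rightarrow> real)
    \<Rightarrow> ((nat \<Rightarrow> int) \<times> (nat \<Rightarrow> int) \<Rightarrow> 'a \<Rightarrow> real) \<Rightarrow> bool" where
  "gaussian_model M d X0 W \<longleftrightarrow>
     prob_space M \<and>
     distributed M lborel X0 (\<lambda>x. ennreal (std_normal_density x)) \<and>
     (\<forall>e\<in>covpairs d. distributed M lborel (W e) (\<lambda>x. ennreal (std_normal_density x))) \<and>
     prob_space.indep_vars M (\<lambda>_. borel) (\<lambda>k. case k of None \<Rightarrow> X0 | Some e \<Rightarrow> W e)
        (insert None (Some ` covpairs d))"

definition var :: "'a measure \<Rightarrow> ('a \<Rightarrow> real) \<Rightarrow> real" where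
  "var M f = (\<integral>\<omega>. (f \<omega> - (\<integral>\<omega>'. f \<omega>' \<partial>M))\<^sup>2 \<partial>M)"

definition cov :: "'a measure \<Rightarrow> ('a \<Rightarrow> real) \<Rightarrow> ('a \<Rightarrow> real) \<Rightarrow> real" where
  "cov M f g = (\<integral>\<omega>. (f \<omega> - (\<integral>\<omega>'. f \<omega>' \<partial>M)) * (g \<omega> - (\<integral>\<omega>'. g \<omega>' \<partial>M)) \<partial>M)"

definition corr :: "'a measure \<Rightarrow> ('a \<Rightarrow> real) \<Rightarrow> ('a \<Rightarrow> real) \<Rightarrow> real" where
  "corr M f g = cov M f g / sqrt (var M f * var M g)"

definition window :: "nat \<Rightarrow> (nat \<Rightarrow> int) \<Rightarrow> nat \<Rightarrow> (nat \<Rightarrow> int) set" where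
  "window d x N = {v \<in> HS d. \<forall>i\<le>d. x i \<le> v i \<and> v i < x i + int N}"

definition zeta :: "nat \<Rightarrow> (nat \<Rightarrow> real) \<Rightarrow> ('a \<Rightarrow> real)
    \<Rightarrow> ((nat \<Rightarrow> int) \<times> (nat \<Rightarrow> int) \<Rightarrow> 'a \<Rightarrow> real) \<Rightarrow> ((nat \<Rightarrow> int) \<Rightarrow> real) \<Rightarrow> nat \<Rightarrow> 'a \<Rightarrow> real" where
  "zeta d \<alpha> X0 W c t = (\<lambda>\<omega>. \<Sum>u\<in>{u \<in> layer d t. c u \<noteq> 0}. c u * Xv d \<alpha> X0 W u \<omega>)"

definition recon_width :: "'a measure \<Rightarrow> nat \<Rightarrow> (nat \<Rightarrow> real) \<Rightarrow> ('a \<Rightarrow> real)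
    \<Rightarrow> ((nat \<Rightarrow> int) \<times> (nat \<Rightarrow> int) \<Rightarrow> 'a \<Rightarrow> real) \<Rightarrow> nat \<Rightarrow> bool" where
  "recon_width M d \<alpha> X0 W N \<longleftrightarrow>
     (\<exists>(x :: nat \<Rightarrow> nat \<Rightarrow> int) (c :: (nat \<Rightarrow> int) \<Rightarrow> real).
        (\<forall>t. \<forall>u\<in>layer d t. c u \<noteq> 0 \<longrightarrow> u \<in> window d (x t) N) \<and>
        (\<forall>t. var M (zeta d \<alpha> X0 W c t) > 0) \<and>
        \<not> ((\<lambda>t. corr M (zeta d \<alpha> X0 W c t) X0) \<longlonglongrightarrow> 0))"

definition local_reconstruction where
  "local_reconstruction M d \<alpha> X0 W \<longleftrightarrow> (\<exists>N. recon_width M d \<alpha> X0 W N)"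

definition single_vertex_reconstruction where
  "single_vertex_reconstruction M d \<alpha> X0 W \<longleftrightarrow> recon_width M d \<alpha> X0 W 1"

end

theory Submission
  imports Defs "HOL-Library.Function_Algebras"
begin

locale gm =
  fixes M :: "'a measure" and d :: nat and X0 :: "'a \<Rightarrow> real"
    and W :: "(nat \<Rightarrow> int) \<times> (nat \<Rightarrow> int) \<Rightarrow> 'a \<Rightarrow> real"
  assumes gm: "gaussian_model M d X0 W"
begin

sublocale prob_space M using gm unfolding gaussian_model_def by auto

definition Z :: "((nat\<Rightarrow>int)\<times>(nat\<Rightarrow>int)) option \<Rightarrow> 'a \<Rightarrow> real" where
  "Z k = (case k of None \<Rightarrow> X0 | Some e \<Rightarrow> W e)"

abbreviation "I \<equiv> insert None (Some ` covpairs d)"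

lemma Z_distr: "k \<in> I \<Longrightarrow> distributed M lborel (Z k) (\<lambda>x. ennreal (std_normal_density x))"
  using gm unfolding gaussian_model_def Z_def by auto

lemma Z_indep: "indep_vars (\<lambda>_. borel) Z I"
proof -
  have "Z = (\<lambda>k. case k of None \<Rightarrow> X0 | Some e \<Rightarrow> W e)" by (rule ext) (simp add: Z_def)
  then show ?thesis using gm unfolding gaussian_model_def by simp
qed

lemma Z_int: "k \<in> I \<Longrightarrow> integrable M (Z k)"
  using distributed_integrable_var[OF Z_distr[of k]]
    integrable_std_normal_moment[of 1] by simp

lemma Z_exp: "k \<in> I \<Longrightarrow> expectation (Z k) = 0"
  using standard_normal_distributed_expectation Z_distr by blast

lemma Z_sq_int: "k \<in> I \<Longrightarrow> integrable M (\<lambda>\<omega>. Z k \<omega> * Z k \<omega>)"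
  using distributed_integrable[OF Z_distr, of k "\<lambda>x. x * x"]
    integrable_std_normal_moment[of 2] by (simp add: power2_eq_square)

lemma Z_sq_exp: "k \<in> I \<Longrightarrow> expectation (\<lambda>\<omega>. Z k \<omega> * Z k \<omega>) = 1"
  using standard_normal_distributed_variance[OF Z_distr, of k] Z_exp[of k]
  by (simp add: power2_eq_square)

lemma Z_prod:
  assumes "k \<in> I" "l \<in> I"
  shows "integrable M (\<lambda>\<omega>. Z k \<omega> * Z l \<omega>)"
    "expectation (\<lambda>\<omega>. Z k \<omega> * Z l \<omega>) = (if k = l then 1 else 0)"
proof -
  have "integrable M (\<lambda>\<omega>. Z k \<omega> * Z l \<omega>) \<and> expectation (\<lambda>\<omega>. Z k \<omega> * Z l \<omega>) = (if k = l then 1 else 0)"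
  proof (cases "k = l")
    case True then show ?thesis using Z_sq_int Z_sq_exp assms by simp
  next
    case False
    have ind: "indep_vars (\<lambda>_. borel) Z {k, l}"
      by (rule indep_vars_subset[OF Z_indep]) (use assms in auto)
    have i2: "\<And>i. i \<in> {k,l} \<Longrightarrow> integrable M (Z i)" using Z_int assms by auto
    have pe: "(\<lambda>\<omega>. \<Prod>i\<in>{k,l}. Z i \<omega>) = (\<lambda>\<omega>. Z k \<omega> * Z l \<omega>)" using False by simp
    have "integrable M (\<lambda>\<omega>. \<Prod>i\<in>{k,l}. Z i \<omega>)"
      by (rule indep_vars_integrable[OF _ ind i2]) simp
    moreover have "(\<integral>\<omega>. (\<Prod>i\<in>{k,l}. Z i \<omega>) \<partial>M) = (\<Prod>i\<in>{k,l}. \<integral>\<omega>. Z i \<omega> \<partial>M)"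
      by (rule indep_vars_lebesgue_integral[OF _ ind i2]) simp
    ultimately show ?thesis using pe False Z_exp assms by simp
  qed
  then show "integrable M (\<lambda>\<omega>. Z k \<omega> * Z l \<omega>)"
    "expectation (\<lambda>\<omega>. Z k \<omega> * Z l \<omega>) = (if k = l then 1 else 0)" by auto
qed

end

lemma unitv_sum: "i \<le> d \<Longrightarrow> (\<Sum>k\<le>d. unitv i k) = 1"
  unfolding unitv_def by simp

lemma unitv_inj: "unitv i = unitv j \<longleftrightarrow> i = j"
  unfolding unitv_def by (metis (mono_tags) zero_neq_one)

lemma rank_diff: "rank d (u - v) = rank d u - rank d v"
  unfolding rank_def by (simp add: sum_subtractf)

lemma rank_add: "rank d (u + v) = rank d u + rank d v"
  unfolding rank_def by (simp add: sum.distrib)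

lemma rank_unitv: "i \<le> d \<Longrightarrow> rank d (unitv i) = 1"
  unfolding rank_def by (rule unitv_sum)

lemma layer_iff: "u \<in> layer d t \<longleftrightarrow> (\<forall>i>d. u i = 0) \<and> rank d u = int t"
  unfolding layer_def HS_def rank_def by auto

lemma HS_iff: "u \<in> HS d \<longleftrightarrow> (\<forall>i>d. u i = 0) \<and> rank d u \<ge> 0"
  unfolding HS_def rank_def by auto

lemma layer_sub: assumes "u \<in> layer d (Suc t)" "i \<le> d"
  shows "u - unitv i \<in> layer d t"
  using assms rank_unitv[OF assms(2)] unfolding layer_iff by (auto simp: rank_diff unitv_def)

lemma parents_layer:
  assumes u: "u \<in> layer d (Suc t)"
  shows "parents d u = (\<lambda>i. u - unitv i) ` {..d}"
proof -
  have "covers d p u \<longleftrightarrow> p \<in> (\<lambda>i. u - unitv i) ` {..d}" for p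
  proof
    assume "covers d p u"
    then obtain i where "i \<le> d" "u = (\<lambda>j. p j + unitv i j)" unfolding covers_def by auto
    then show "p \<in> (\<lambda>i. u - unitv i) ` {..d}" by (auto simp: fun_eq_iff intro!: image_eqI[of _ _ i])
  next
    assume "p \<in> (\<lambda>i. u - unitv i) ` {..d}"
    then obtain i where i: "i \<le> d" "p = u - unitv i" by auto
    have "p \<in> HS d" using layer_sub[OF u i(1)] unfolding i(2) layer_def by blast
    moreover have "u \<in> HS d" using u unfolding layer_def by auto
    moreover have "u = (\<lambda>j. p j + unitv i j)" using i(2) by (simp add: fun_eq_iff)
    ultimately show "covers d p u" unfolding covers_def using i(1) by blast
  qed
  then show ?thesis unfolding parents_def by auto
qed

lemma inj_sub_unitv: "inj_on (\<lambda>i. u - unitv i) A"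
  by (rule inj_onI) (metis diff_left_imp_eq unitv_inj)

lemma card_parents: "u \<in> layer d (Suc t) \<Longrightarrow> card (parents d u) = Suc d"
  by (simp add: parents_layer card_image inj_sub_unitv)

lemma sum_parents: "u \<in> layer d (Suc t) \<Longrightarrow> (\<Sum>p\<in>parents d u. f p) = (\<Sum>i\<le>d. f (u - unitv i))"
  by (simp add: parents_layer sum.reindex inj_sub_unitv)

lemma covpair_parent: "u \<in> layer d (Suc t) \<Longrightarrow> i \<le> d \<Longrightarrow> (u - unitv i, u) \<in> covpairs d"
  unfolding covpairs_def using parents_layer[of u d t] by (auto simp: parents_def)

lemma Xr_Suc: "u \<in> layer d (Suc t) \<Longrightarrow>
  Xr d \<alpha> X0 W (Suc t) u = (\<lambda>\<omega>. \<alpha> (Suc d) * (\<Sum>i\<le>d. Xr d \<alpha> X0 W t (u - unitv i) \<omega> + W (u - unitv i, u) \<omega>))"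
  by (simp add: card_parents sum_parents)

primrec FF :: "nat \<Rightarrow> real \<Rightarrow> nat \<Rightarrow> (nat \<Rightarrow> int) \<Rightarrow> real" where
  "FF d a 0 x = 0"
| "FF d a (Suc t) x = a\<^sup>2 * ((\<Sum>i\<le>d. \<Sum>j\<le>d. FF d a t (x - unitv i + unitv j)) + real (Suc d) * (if x = 0 then 1 else 0))"

locale gm2 = gm +
  fixes \<alpha> :: "nat \<Rightarrow> real"
  assumes apos: "\<alpha> (Suc d) > 0"
begin

abbreviation "a \<equiv> \<alpha> (Suc d)"
abbreviation "b \<equiv> a * real (Suc d)"
abbreviation "X \<equiv> Xr d \<alpha> X0 W"
abbreviation "F \<equiv> FF d a"

definition inv :: "nat \<Rightarrow> bool" where
 "inv t \<longleftrightarrow> (\<forall>u\<in>layer d t. integrable M (X t u) \<and> expectation (X t u) = 0 \<and>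
    (\<forall>k\<in>I. integrable M (\<lambda>\<omega>. X t u \<omega> * Z k \<omega>)) \<and>
    expectation (\<lambda>\<omega>. X t u \<omega> * X0 \<omega>) = b ^ t \<and>
    (\<forall>e\<in>covpairs d. rank d (snd e) > int t \<longrightarrow> expectation (\<lambda>\<omega>. X t u \<omega> * W e \<omega>) = 0) \<and>
    (\<forall>v\<in>layer d t. integrable M (\<lambda>\<omega>. X t u \<omega> * X t v \<omega>) \<and>
        expectation (\<lambda>\<omega>. X t u \<omega> * X t v \<omega>) = b ^ (2 * t) + F t (u - v)))"

lemma ZN: "Z None = X0" by (simp add: Z_def)
lemma ZS: "Z (Some e) = W e" by (simp add: Z_def)

lemma inv0: "inv 0"
proof -
  have N: "None \<in> I" by simp
  have "(\<forall>e\<in>covpairs d. expectation (\<lambda>\<omega>. X0 \<omega> * W e \<omega>) = 0)"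
    using Z_prod(2)[OF N, of "Some e" for e] by (auto simp: ZN ZS)
  moreover have "integrable M (\<lambda>\<omega>. X0 \<omega> * X0 \<omega>)" "expectation (\<lambda>\<omega>. X0 \<omega> * X0 \<omega>) = 1"
    using Z_prod[OF N N] by (auto simp: ZN)
  moreover have "\<forall>k\<in>I. integrable M (\<lambda>\<omega>. X0 \<omega> * Z k \<omega>)"
    using Z_prod(1)[OF N] by (auto simp: ZN)
  moreover have "integrable M X0" "expectation X0 = 0" using Z_int[OF N] Z_exp[OF N] by (auto simp: ZN)
  ultimately show ?thesis unfolding inv_def by simp
qed

lemma int_sum_c: fixes f :: "'i \<Rightarrow> 'a \<Rightarrow> real" shows "finite A \<Longrightarrow> (\<And>i. i \<in> A \<Longrightarrow> integrable M (f i)) \<Longrightarrow> integrable M (\<lambda>\<omega>. c * (\<Sum>i\<in>A. f i \<omega>))"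
proof -
  assume "finite A" "\<And>i. i \<in> A \<Longrightarrow> integrable M (f i)"
  then have "integrable M (\<lambda>\<omega>. \<Sum>i\<in>A. f i \<omega>)" by (intro Bochner_Integration.integrable_sum) auto
  then show ?thesis by (rule Bochner_Integration.integrable_mult_right)
qed

lemma exp_sum_c: fixes f :: "'i \<Rightarrow> 'a \<Rightarrow> real" shows "finite A \<Longrightarrow> (\<And>i. i \<in> A \<Longrightarrow> integrable M (f i)) \<Longrightarrow>
   expectation (\<lambda>\<omega>. c * (\<Sum>i\<in>A. f i \<omega>)) = c * (\<Sum>i\<in>A. expectation (f i))"
  by (subst Bochner_Integration.integral_mult_right_zero) (simp add: Bochner_Integration.integral_sum)

lemma prod_expand: fixes c :: real shows "(\<lambda>\<omega>. (c * (\<Sum>i\<in>A. f i \<omega> + g i \<omega>)) * (c' * (\<Sum>j\<in>B. h j \<omega> + k j \<omega>))) =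
   (\<lambda>\<omega>. (c * c') * (\<Sum>i\<in>A. \<Sum>j\<in>B. f i \<omega> * h j \<omega> + f i \<omega> * k j \<omega> + g i \<omega> * h j \<omega> + g i \<omega> * k j \<omega>))"
  by (simp add: sum.distrib sum_product[symmetric] algebra_simps)

lemma prod_expand1: fixes c :: real shows "(\<lambda>\<omega>. (c * (\<Sum>i\<in>A. f i \<omega> + g i \<omega>)) * z \<omega>) =
   (\<lambda>\<omega>. c * (\<Sum>i\<in>A. f i \<omega> * z \<omega> + g i \<omega> * z \<omega>))"
  by (simp add: sum_distrib_left sum_distrib_right algebra_simps sum.distrib)

lemma inv_Suc:
  assumes IH: "inv t"
  shows "inv (Suc t)"
  unfolding inv_def
proof
  fix u assume u: "u \<in> layer d (Suc t)"
  define p where "p i = u - unitv i" for i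
  have pl: "i \<le> d \<Longrightarrow> p i \<in> layer d t" for i using layer_sub[OF u] p_def by auto
  have pI: "i \<le> d \<Longrightarrow> Some (p i, u) \<in> I" for i using covpair_parent[OF u] p_def by auto
  have Xu: "X (Suc t) u = (\<lambda>\<omega>. a * (\<Sum>i\<le>d. X t (p i) \<omega> + W (p i, u) \<omega>))"
    using Xr_Suc[OF u] p_def by simp
  have rku: "rank d u = int t + 1" using u unfolding layer_iff by simp
  note IHp = IH[unfolded inv_def, rule_format, OF pl]
  have Wi: "i \<le> d \<Longrightarrow> integrable M (W (p i, u))" for i using Z_int[OF pI] by (simp add: ZS)
  have Pi: "i \<le> d \<Longrightarrow> integrable M (X t (p i))" for i using IHp by auto
  have PZ: "i \<le> d \<Longrightarrow> k \<in> I \<Longrightarrow> integrable M (\<lambda>\<omega>. X t (p i) \<omega> * Z k \<omega>)" for i k using IHp by auto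
  have WZ: "i \<le> d \<Longrightarrow> k \<in> I \<Longrightarrow> integrable M (\<lambda>\<omega>. W (p i, u) \<omega> * Z k \<omega>)" for i k
    using Z_prod(1)[OF pI] by (simp add: ZS)
  have WZe: "i \<le> d \<Longrightarrow> k \<in> I \<Longrightarrow> expectation (\<lambda>\<omega>. W (p i, u) \<omega> * Z k \<omega>) = (if Some (p i, u) = k then 1 else 0)" for i k
    using Z_prod(2)[OF pI] by (simp add: ZS)
  have N: "None \<in> I" by simp
  show "integrable M (X (Suc t) u) \<and> expectation (X (Suc t) u) = 0 \<and>
    (\<forall>k\<in>I. integrable M (\<lambda>\<omega>. X (Suc t) u \<omega> * Z k \<omega>)) \<and>
    expectation (\<lambda>\<omega>. X (Suc t) u \<omega> * X0 \<omega>) = b ^ (Suc t) \<and>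
    (\<forall>e\<in>covpairs d. rank d (snd e) > int (Suc t) \<longrightarrow> expectation (\<lambda>\<omega>. X (Suc t) u \<omega> * W e \<omega>) = 0) \<and>
    (\<forall>v\<in>layer d (Suc t). integrable M (\<lambda>\<omega>. X (Suc t) u \<omega> * X (Suc t) v \<omega>) \<and>
        expectation (\<lambda>\<omega>. X (Suc t) u \<omega> * X (Suc t) v \<omega>) = b ^ (2 * Suc t) + F (Suc t) (u - v))"
  proof (intro conjI ballI impI)
    show "integrable M (X (Suc t) u)" unfolding Xu
      by (rule int_sum_c) (auto intro!: Bochner_Integration.integrable_add Pi Wi)
    have "i \<le> d \<Longrightarrow> expectation (\<lambda>\<omega>. X t (p i) \<omega> + W (p i, u) \<omega>) = 0" for i
      using IHp[of i] Z_exp[OF pI, of i] Pi[of i] Wi[of i] by (simp add: ZS Bochner_Integration.integral_add)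
    then show "expectation (X (Suc t) u) = 0" unfolding Xu
      by (subst exp_sum_c) (auto intro!: Bochner_Integration.integrable_add Pi Wi)
    fix k assume k: "k \<in> I"
    show "integrable M (\<lambda>\<omega>. X (Suc t) u \<omega> * Z k \<omega>)" unfolding Xu prod_expand1
      by (rule int_sum_c) (auto intro!: Bochner_Integration.integrable_add PZ WZ k)
  next
    have "expectation (\<lambda>\<omega>. X (Suc t) u \<omega> * X0 \<omega>) = a * (\<Sum>i\<le>d. b ^ t)"
      unfolding Xu prod_expand1
      using IHp WZe[OF _ N] PZ[OF _ N] WZ[OF _ N]
      by (subst exp_sum_c) (auto intro!: Bochner_Integration.integrable_add sum.cong simp: ZN)
    then show "expectation (\<lambda>\<omega>. X (Suc t) u \<omega> * X0 \<omega>) = b ^ Suc t" by simp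
  next
    fix e assume e: "e \<in> covpairs d" "int (Suc t) < rank d (snd e)"
    have eI: "Some e \<in> I" using e by simp
    have ne: "Some (p i, u) \<noteq> Some e" for i using e rku by auto
    show "expectation (\<lambda>\<omega>. X (Suc t) u \<omega> * W e \<omega>) = 0"
      unfolding Xu prod_expand1
      using IHp WZe[OF _ eI] PZ[OF _ eI] WZ[OF _ eI] e ne
      by (subst exp_sum_c) (auto intro!: Bochner_Integration.integrable_add sum.neutral simp: ZS)
  next
    fix v assume v: "v \<in> layer d (Suc t)"
    define q where "q i = v - unitv i" for i
    have ql: "i \<le> d \<Longrightarrow> q i \<in> layer d t" for i using layer_sub[OF v] q_def by auto
    have qI: "i \<le> d \<Longrightarrow> Some (q i, v) \<in> I" for i using covpair_parent[OF v] q_def by auto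
    have Xv: "X (Suc t) v = (\<lambda>\<omega>. a * (\<Sum>i\<le>d. X t (q i) \<omega> + W (q i, v) \<omega>))"
      using Xr_Suc[OF v] q_def by simp
    have rkv: "rank d v = int t + 1" using v unfolding layer_iff by simp
    note IHq = IH[unfolded inv_def, rule_format, OF ql]
    have int_terms: "i \<le> d \<Longrightarrow> j \<le> d \<Longrightarrow>
      integrable M (\<lambda>\<omega>. X t (p i) \<omega> * X t (q j) \<omega> + X t (p i) \<omega> * W (q j, v) \<omega> +
                         W (p i, u) \<omega> * X t (q j) \<omega> + W (p i, u) \<omega> * W (q j, v) \<omega>)" for i j
    proof -
      assume ij: "i \<le> d" "j \<le> d"
      have 1: "integrable M (\<lambda>\<omega>. X t (p i) \<omega> * X t (q j) \<omega>)" using IHp[OF ij(1)] ql[OF ij(2)] by auto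
      have 2: "integrable M (\<lambda>\<omega>. X t (p i) \<omega> * W (q j, v) \<omega>)" using PZ[OF ij(1) qI[OF ij(2)]] by (simp add: ZS)
      have 3: "integrable M (\<lambda>\<omega>. W (p i, u) \<omega> * X t (q j) \<omega>)"
        using IHq[OF ij(2)] pI[OF ij(1)] by (auto simp: ZS mult.commute)
      have 4: "integrable M (\<lambda>\<omega>. W (p i, u) \<omega> * W (q j, v) \<omega>)" using WZ[OF ij(1) qI[OF ij(2)]] by (simp add: ZS)
      show ?thesis using 1 2 3 4 by (intro Bochner_Integration.integrable_add)
    qed
    have eq: "(\<lambda>\<omega>. X (Suc t) u \<omega> * X (Suc t) v \<omega>) = (\<lambda>\<omega>. (a * a) * (\<Sum>i\<le>d. \<Sum>j\<le>d.
       X t (p i) \<omega> * X t (q j) \<omega> + X t (p i) \<omega> * W (q j, v) \<omega> +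
                         W (p i, u) \<omega> * X t (q j) \<omega> + W (p i, u) \<omega> * W (q j, v) \<omega>))"
      unfolding Xu Xv by (rule prod_expand)
    show "integrable M (\<lambda>\<omega>. X (Suc t) u \<omega> * X (Suc t) v \<omega>)" unfolding eq
      by (rule int_sum_c) (auto intro!: integrable_sum int_terms)
    have termE: "expectation (\<lambda>\<omega>. X t (p i) \<omega> * X t (q j) \<omega> + X t (p i) \<omega> * W (q j, v) \<omega> +
                         W (p i, u) \<omega> * X t (q j) \<omega> + W (p i, u) \<omega> * W (q j, v) \<omega>)
       = b ^ (2 * t) + F t (u - v - unitv i + unitv j) + (if i = j \<and> u = v then 1 else 0)"
      if ij: "i \<le> d" "j \<le> d" for i j
    proof -
      have 1: "integrable M (\<lambda>\<omega>. X t (p i) \<omega> * X t (q j) \<omega>)" using IHp[OF ij(1)] ql[OF ij(2)] by auto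
      have 2: "integrable M (\<lambda>\<omega>. X t (p i) \<omega> * W (q j, v) \<omega>)" using PZ[OF ij(1) qI[OF ij(2)]] by (simp add: ZS)
      have 3: "integrable M (\<lambda>\<omega>. W (p i, u) \<omega> * X t (q j) \<omega>)"
        using IHq[OF ij(2)] pI[OF ij(1)] by (auto simp: ZS mult.commute)
      have 4: "integrable M (\<lambda>\<omega>. W (p i, u) \<omega> * W (q j, v) \<omega>)" using WZ[OF ij(1) qI[OF ij(2)]] by (simp add: ZS)
      have e1: "expectation (\<lambda>\<omega>. X t (p i) \<omega> * X t (q j) \<omega>) = b ^ (2 * t) + F t (u - v - unitv i + unitv j)"
        using IHp[OF ij(1)] ql[OF ij(2)] by (auto simp: p_def q_def algebra_simps)
      have cq: "(q j, v) \<in> covpairs d" using qI[OF ij(2)] by auto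
      have e2: "expectation (\<lambda>\<omega>. X t (p i) \<omega> * W (q j, v) \<omega>) = 0"
        using IHp[OF ij(1)] cq rkv by auto
      have cp: "(p i, u) \<in> covpairs d" using pI[OF ij(1)] by auto
      have e3: "expectation (\<lambda>\<omega>. W (p i, u) \<omega> * X t (q j) \<omega>) = 0"
        using IHq[OF ij(2)] cp rku by (auto simp: mult.commute)
      have e4: "expectation (\<lambda>\<omega>. W (p i, u) \<omega> * W (q j, v) \<omega>) = (if i = j \<and> u = v then 1 else 0)"
      proof -
        have "(p i, u) = (q j, v) \<longleftrightarrow> i = j \<and> u = v"
          by (auto simp: p_def q_def unitv_inj)
        then show ?thesis using WZe[OF ij(1) qI[OF ij(2)]] by (simp add: ZS)
      qed
      show ?thesis using 1 2 3 4 e1 e2 e3 e4 by (simp add: Bochner_Integration.integral_add)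
    qed
    have inner: "expectation (\<lambda>\<omega>. \<Sum>j\<le>d. X t (p i) \<omega> * X t (q j) \<omega> + X t (p i) \<omega> * W (q j, v) \<omega> +
                         W (p i, u) \<omega> * X t (q j) \<omega> + W (p i, u) \<omega> * W (q j, v) \<omega>) =
         (\<Sum>j\<le>d. b ^ (2 * t) + F t (u - v - unitv i + unitv j) + (if i = j \<and> u = v then 1 else 0))"
      if i: "i \<le> d" for i
      by (subst Bochner_Integration.integral_sum) (auto intro!: int_terms i sum.cong simp: termE i)
    have "expectation (\<lambda>\<omega>. X (Suc t) u \<omega> * X (Suc t) v \<omega>) = (a * a) * (\<Sum>i\<le>d. \<Sum>j\<le>d.
        b ^ (2 * t) + F t (u - v - unitv i + unitv j) + (if i = j \<and> u = v then 1 else 0))"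
      unfolding eq
      by (subst exp_sum_c) (auto intro!: Bochner_Integration.integrable_sum int_terms sum.cong simp: inner)
    also have "\<dots> = (a * a) * (real (Suc d) * real (Suc d) * b ^ (2 * t) + (\<Sum>i\<le>d. \<Sum>j\<le>d. F t (u - v - unitv i + unitv j))
        + real (Suc d) * (if u = v then 1 else 0))"
      by (simp add: sum.distrib sum.delta)
    also have "\<dots> = b ^ (2 * Suc t) + F (Suc t) (u - v)"
      by (simp add: power2_eq_square power_mult_distrib algebra_simps power_mult)
    finally show "expectation (\<lambda>\<omega>. X (Suc t) u \<omega> * X (Suc t) v \<omega>) = b ^ (2 * Suc t) + F (Suc t) (u - v)" .
  qed
qed

lemma inv_all: "inv t"
  by (induction t) (auto intro: inv0 inv_Suc)

end

definition Z0 :: "nat \<Rightarrow> (nat \<Rightarrow> int) set" where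
  "Z0 d = {x. (\<forall>i>d. x i = 0) \<and> rank d x = 0}"

definition QF :: "nat \<Rightarrow> real \<Rightarrow> nat \<Rightarrow> (nat \<Rightarrow> int) set \<Rightarrow> ((nat \<Rightarrow> int) \<Rightarrow> real) \<Rightarrow> real" where
  "QF d a' t A c = (\<Sum>u\<in>A. \<Sum>v\<in>A. c u * c v * FF d a' t (u - v))"

definition vt :: "nat \<Rightarrow> nat \<Rightarrow> int" where
  "vt t = (\<lambda>i. if i = 0 then int t else 0)"

lemma rank_vt: "rank d (vt t) = int t"
  unfolding rank_def vt_def by (simp add: sum.delta)

lemma vt_layer: "vt t \<in> layer d t"
  using rank_vt[of d t] unfolding layer_iff vt_def by simp

lemma Z0_layer: "x \<in> Z0 d \<Longrightarrow> u \<in> layer d t \<Longrightarrow> x + u \<in> layer d t"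
  unfolding Z0_def layer_iff by (simp add: rank_add)

lemma layer_diff_Z0: "u \<in> layer d t \<Longrightarrow> v \<in> layer d t \<Longrightarrow> u - v \<in> Z0 d"
  unfolding Z0_def layer_iff by (simp add: rank_diff)

context prob_space
begin

lemma gram_nonneg:
  fixes N :: "'i \<Rightarrow> 'a \<Rightarrow> real"
  assumes "finite J" "\<And>j j'. j \<in> J \<Longrightarrow> j' \<in> J \<Longrightarrow> integrable M (\<lambda>\<omega>. N j \<omega> * N j' \<omega>)"
  shows "expectation (\<lambda>\<omega>. (\<Sum>j\<in>J. c j * N j \<omega>)\<^sup>2) = (\<Sum>j\<in>J. \<Sum>j'\<in>J. c j * c j' * expectation (\<lambda>\<omega>. N j \<omega> * N j' \<omega>))"
    and "0 \<le> (\<Sum>j\<in>J. \<Sum>j'\<in>J. c j * c j' * expectation (\<lambda>\<omega>. N j \<omega> * N j' \<omega>))"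
proof -
  have eq: "(\<lambda>\<omega>. (\<Sum>j\<in>J. c j * N j \<omega>)\<^sup>2) = (\<lambda>\<omega>. \<Sum>j\<in>J. \<Sum>j'\<in>J. (c j * c j') * (N j \<omega> * N j' \<omega>))"
    by (rule ext) (simp add: power2_eq_square sum_product algebra_simps)
  show 1: "expectation (\<lambda>\<omega>. (\<Sum>j\<in>J. c j * N j \<omega>)\<^sup>2) = (\<Sum>j\<in>J. \<Sum>j'\<in>J. c j * c j' * expectation (\<lambda>\<omega>. N j \<omega> * N j' \<omega>))"
    unfolding eq using assms
    by (subst Bochner_Integration.integral_sum) (auto intro!: sum.cong simp: Bochner_Integration.integral_sum)
  have "0 \<le> expectation (\<lambda>\<omega>. (\<Sum>j\<in>J. c j * N j \<omega>)\<^sup>2)" by (rule integral_nonneg_AE) auto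
  then show "0 \<le> (\<Sum>j\<in>J. \<Sum>j'\<in>J. c j * c j' * expectation (\<lambda>\<omega>. N j \<omega> * N j' \<omega>))" using 1 by simp
qed

end

context gm2
begin

lemma invD: assumes "u \<in> layer d t"
  shows "integrable M (X t u)" "expectation (X t u) = 0"
    "integrable M (\<lambda>\<omega>. X t u \<omega> * X0 \<omega>)" "expectation (\<lambda>\<omega>. X t u \<omega> * X0 \<omega>) = b ^ t"
    "v \<in> layer d t \<Longrightarrow> integrable M (\<lambda>\<omega>. X t u \<omega> * X t v \<omega>)"
    "v \<in> layer d t \<Longrightarrow> expectation (\<lambda>\<omega>. X t u \<omega> * X t v \<omega>) = b ^ (2 * t) + F t (u - v)"
  using inv_all[of t] assms unfolding inv_def by (auto simp: ZN dest!: bspec[where x=None])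

lemma X0sq: "integrable M (\<lambda>\<omega>. X0 \<omega> * X0 \<omega>)" "expectation (\<lambda>\<omega>. X0 \<omega> * X0 \<omega>) = 1"
  using Z_prod[of None None] by (auto simp: ZN)

lemma noise_cov:
  assumes u: "u \<in> layer d t" and v: "v \<in> layer d t"
  shows "integrable M (\<lambda>\<omega>. (X t u \<omega> - b ^ t * X0 \<omega>) * (X t v \<omega> - b ^ t * X0 \<omega>))"
    "expectation (\<lambda>\<omega>. (X t u \<omega> - b ^ t * X0 \<omega>) * (X t v \<omega> - b ^ t * X0 \<omega>)) = F t (u - v)"
proof -
  have eq: "(\<lambda>\<omega>. (X t u \<omega> - b ^ t * X0 \<omega>) * (X t v \<omega> - b ^ t * X0 \<omega>)) =
     (\<lambda>\<omega>. X t u \<omega> * X t v \<omega> - b ^ t * (X t u \<omega> * X0 \<omega>) - b ^ t * (X t v \<omega> * X0 \<omega>) + b ^ t * b ^ t * (X0 \<omega> * X0 \<omega>))"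
    by (rule ext) (simp add: algebra_simps)
  note i = invD[OF u] invD[OF v] X0sq
  show "integrable M (\<lambda>\<omega>. (X t u \<omega> - b ^ t * X0 \<omega>) * (X t v \<omega> - b ^ t * X0 \<omega>))"
    unfolding eq using i v by (intro Bochner_Integration.integrable_add Bochner_Integration.integrable_diff
        Bochner_Integration.integrable_mult_right) auto
  show "expectation (\<lambda>\<omega>. (X t u \<omega> - b ^ t * X0 \<omega>) * (X t v \<omega> - b ^ t * X0 \<omega>)) = F t (u - v)"
    unfolding eq using i v
    by (subst Bochner_Integration.integral_add Bochner_Integration.integral_diff, (intro Bochner_Integration.integrable_add Bochner_Integration.integrable_diff
        Bochner_Integration.integrable_mult_right; auto)+)+ (simp add: power_mult power2_eq_square power_mult_distrib)
qed

lemma pd: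
  fixes \<pi> :: "'i \<Rightarrow> nat \<Rightarrow> int"
  assumes "finite J" "\<And>j. j \<in> J \<Longrightarrow> \<pi> j \<in> Z0 d"
  shows "0 \<le> (\<Sum>j\<in>J. \<Sum>j'\<in>J. c j * c j' * F t (\<pi> j - \<pi> j'))"
proof -
  define P where "P j = \<pi> j + vt t" for j
  have P: "j \<in> J \<Longrightarrow> P j \<in> layer d t" for j using Z0_layer[OF assms(2) vt_layer] P_def by auto
  define N where "N j \<omega> = X t (P j) \<omega> - b ^ t * X0 \<omega>" for j \<omega>
  have "0 \<le> (\<Sum>j\<in>J. \<Sum>j'\<in>J. c j * c j' * expectation (\<lambda>\<omega>. N j \<omega> * N j' \<omega>))"
    using assms(1) noise_cov(1)[OF P P] unfolding N_def by (intro gram_nonneg(2)) auto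
  also have "\<dots> = (\<Sum>j\<in>J. \<Sum>j'\<in>J. c j * c j' * F t (\<pi> j - \<pi> j'))"
    using noise_cov(2)[OF P P] unfolding N_def P_def by (intro sum.cong) auto
  finally show ?thesis .
qed

lemma zeta_stats:
  fixes c :: "(nat \<Rightarrow> int) \<Rightarrow> real"
  assumes A: "finite A" "A \<subseteq> layer d t"
  shows "var M (\<lambda>\<omega>. \<Sum>u\<in>A. c u * X t u \<omega>) = b ^ (2 * t) * (sum c A)\<^sup>2 + QF d a t A c"
    "cov M (\<lambda>\<omega>. \<Sum>u\<in>A. c u * X t u \<omega>) X0 = b ^ t * sum c A" "var M X0 = 1"
proof -
  define \<zeta> where "\<zeta> = (\<lambda>\<omega>. \<Sum>u\<in>A. c u * X t u \<omega>)"
  have iA: "u \<in> A \<Longrightarrow> integrable M (X t u)" for u using invD(1) A by auto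
  have E0: "expectation \<zeta> = 0" unfolding \<zeta>_def using A iA invD(2)
    by (simp add: Bochner_Integration.integral_sum subset_iff)
  have X00: "expectation X0 = 0" using Z_exp[of None] by (simp add: ZN)
  have "var M \<zeta> = expectation (\<lambda>\<omega>. (\<Sum>u\<in>A. c u * X t u \<omega>)\<^sup>2)"
    unfolding var_def E0 by (simp add: \<zeta>_def)
  also have "\<dots> = (\<Sum>u\<in>A. \<Sum>v\<in>A. c u * c v * expectation (\<lambda>\<omega>. X t u \<omega> * X t v \<omega>))"
    using A invD(5) by (intro gram_nonneg(1)) (auto simp: subset_iff)
  also have "\<dots> = (\<Sum>u\<in>A. \<Sum>v\<in>A. c u * c v * (b ^ (2 * t) + F t (u - v)))"
    using A invD(6) by (intro sum.cong refl) (auto simp: subset_iff)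
  also have "\<dots> = b ^ (2 * t) * (sum c A)\<^sup>2 + QF d a t A c"
    unfolding QF_def by (simp add: power2_eq_square sum_product algebra_simps sum.distrib sum_distrib_left sum_distrib_right)
  finally show "var M (\<lambda>\<omega>. \<Sum>u\<in>A. c u * X t u \<omega>) = b ^ (2 * t) * (sum c A)\<^sup>2 + QF d a t A c" unfolding \<zeta>_def .
  have "cov M \<zeta> X0 = expectation (\<lambda>\<omega>. \<Sum>u\<in>A. c u * (X t u \<omega> * X0 \<omega>))"
    unfolding cov_def E0 X00 by (simp add: \<zeta>_def sum_distrib_right mult.assoc)
  also have "\<dots> = (\<Sum>u\<in>A. c u * b ^ t)"
    using A invD(3,4) by (subst Bochner_Integration.integral_sum) (auto intro!: sum.cong)
  finally show "cov M (\<lambda>\<omega>. \<Sum>u\<in>A. c u * X t u \<omega>) X0 = b ^ t * sum c A" unfolding \<zeta>_def by (simp add: sum_distrib_right mult.commute)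
  show "var M X0 = 1" unfolding var_def X00 using X0sq by (simp add: power2_eq_square)
qed

lemma zeta_eq:
  assumes "finite {u \<in> layer d t. c u \<noteq> 0}"
  shows "zeta d \<alpha> X0 W c t = (\<lambda>\<omega>. \<Sum>u\<in>{u \<in> layer d t. c u \<noteq> 0}. c u * X t u \<omega>)"
proof -
  have "u \<in> layer d t \<Longrightarrow> Xv d \<alpha> X0 W u = X t u" for u unfolding Xv_def layer_iff by simp
  then show ?thesis unfolding zeta_def by (intro ext sum.cong) auto
qed

lemma corr_formula:
  assumes "finite {u \<in> layer d t. c u \<noteq> 0}"
  defines "A \<equiv> {u \<in> layer d t. c u \<noteq> 0}"
  shows "var M (zeta d \<alpha> X0 W c t) = b ^ (2 * t) * (sum c A)\<^sup>2 + QF d a t A c"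
    "corr M (zeta d \<alpha> X0 W c t) X0 = b ^ t * sum c A / sqrt (b ^ (2 * t) * (sum c A)\<^sup>2 + QF d a t A c)"
  using zeta_stats(1,2)[where A=A and t=t and c=c] zeta_stats(3)[of A t] assms zeta_eq[OF assms(1)] unfolding corr_def by auto


end

lemma zero_Z0: "0 \<in> Z0 d" unfolding Z0_def rank_def by simp
lemma Z0_minus: "x \<in> Z0 d \<Longrightarrow> - x \<in> Z0 d" unfolding Z0_def rank_def by (simp add: sum_negf)
lemma Z0_add: "x \<in> Z0 d \<Longrightarrow> y \<in> Z0 d \<Longrightarrow> x + y \<in> Z0 d" unfolding Z0_def by (simp add: rank_add)
lemma Z0_diff: "x \<in> Z0 d \<Longrightarrow> y \<in> Z0 d \<Longrightarrow> x - y \<in> Z0 d" unfolding Z0_def by (simp add: rank_diff)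
lemma Z0_step: "i \<le> d \<Longrightarrow> j \<le> d \<Longrightarrow> unitv i - unitv j \<in> Z0 d"
  unfolding Z0_def by (simp add: rank_diff rank_unitv) (simp add: unitv_def)

context gm2
begin

lemma F_sym: assumes "x \<in> Z0 d" shows "F t (- x) = F t x"
proof -
  have u: "x + vt t \<in> layer d t" by (rule Z0_layer[OF assms vt_layer])
  have "b ^ (2 * t) + F t (x + vt t - vt t) = b ^ (2 * t) + F t (vt t - (x + vt t))"
    using invD(6)[OF u vt_layer] invD(6)[OF vt_layer u] by (simp add: mult.commute)
  then show ?thesis by simp
qed

lemma F0_nonneg: "0 \<le> F t 0"
  using pd[where J="{0::nat}" and \<pi>="\<lambda>_. 0" and c="\<lambda>_. 1" and t=t] zero_Z0 by simp

lemma F_le0: assumes "x \<in> Z0 d" shows "F t x \<le> F t 0"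
proof -
  have P: "\<And>j. j \<in> {0::nat,1} \<Longrightarrow> (if j = 0 then 0 else x) \<in> Z0 d" using zero_Z0 assms by auto
  have "0 \<le> 2 * F t 0 + (- F t (- x) - F t x)"
    using pd[where J="{0::nat,1}" and \<pi>="\<lambda>j. if j = 0 then 0 else x" and c="\<lambda>j. if j = 0 then 1 else -1" and t=t, OF _ P]
    by simp
  then show ?thesis using F_sym[OF assms] by simp
qed

lemma D_tri:
  assumes y: "y \<in> Z0 d" and s: "s \<in> Z0 d"
  shows "F t 0 - F t (y + s) \<le> 2 * (F t 0 - F t y) + 2 * (F t 0 - F t s)"
proof -
  define \<pi> where "\<pi> j = (if j = (0::nat) then y + s else if j = 1 then s else 0)" for j
  define c where "c j = (if j = (0::nat) then 1 else if j = 1 then -2 else (1::real))" for j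
  have P: "\<And>j. j \<in> {0::nat,1,2} \<Longrightarrow> \<pi> j \<in> Z0 d" using zero_Z0 y s Z0_add[OF y s] unfolding \<pi>_def by auto
  have "0 \<le> (\<Sum>j\<in>{0::nat,1,2}. \<Sum>j'\<in>{0,1,2}. c j * c j' * F t (\<pi> j - \<pi> j'))"
    using pd[where J="{0::nat,1,2}" and \<pi>=\<pi> and c=c and t=t, OF _ P] by simp
  also have "\<dots> = 6 * F t 0 - 2 * (F t y + F t (- y)) + (F t (y + s) + F t (- (y + s))) - 2 * (F t s + F t (- s))"
    by (simp add: \<pi>_def c_def algebra_simps)
  finally show ?thesis using F_sym[OF y] F_sym[OF s] F_sym[OF Z0_add[OF y s]] by simp
qed

lemma F_mono: "F t x \<le> F (Suc t) x"
proof (induction t arbitrary: x)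
  case 0 then show ?case by simp
next
  case (Suc t)
  have "(\<Sum>i\<le>d. \<Sum>j\<le>d. F t (x - unitv i + unitv j)) \<le> (\<Sum>i\<le>d. \<Sum>j\<le>d. F (Suc t) (x - unitv i + unitv j))"
    using Suc by (intro sum_mono) auto
  then show ?case
    by (simp only: FF.simps) (intro mult_left_mono add_right_mono; simp)
qed

lemma sum_times: "sum f (A \<times> B) = (\<Sum>a\<in>A. \<Sum>b\<in>B. f (a, b))"
  by (simp add: sum.cartesian_product)

lemma swap4: "(\<Sum>u\<in>A. \<Sum>v\<in>A. \<Sum>i\<in>B. \<Sum>j\<in>B. H u v i j) = (\<Sum>i\<in>B. \<Sum>u\<in>A. \<Sum>j\<in>B. \<Sum>v\<in>A. H u v i j)"
proof -
  have "(\<Sum>u\<in>A. \<Sum>v\<in>A. \<Sum>i\<in>B. \<Sum>j\<in>B. H u v i j) = (\<Sum>u\<in>A. \<Sum>i\<in>B. \<Sum>v\<in>A. \<Sum>j\<in>B. H u v i j)"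
    by (intro sum.cong refl) (rule sum.swap)
  also have "\<dots> = (\<Sum>i\<in>B. \<Sum>u\<in>A. \<Sum>v\<in>A. \<Sum>j\<in>B. H u v i j)" by (rule sum.swap)
  also have "\<dots> = (\<Sum>i\<in>B. \<Sum>u\<in>A. \<Sum>j\<in>B. \<Sum>v\<in>A. H u v i j)"
    by (intro sum.cong refl) (rule sum.swap)
  finally show ?thesis .
qed

lemma fresh:
  assumes A: "finite A" "A \<subseteq> layer d T"
  shows "a\<^sup>2 * real (Suc d) * (\<Sum>u\<in>A. (c u)\<^sup>2) \<le> QF d a (Suc t) A c"
proof -
  define \<pi> where "\<pi> p = (case p of (i, u) \<Rightarrow> u - unitv i + unitv 0 - vt T)" for p :: "nat \<times> (nat \<Rightarrow> int)"
  define c' where "c' p = (case p of (i, u) \<Rightarrow> c u)" for p :: "nat \<times> (nat \<Rightarrow> int)"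
  have P: "p \<in> {..d} \<times> A \<Longrightarrow> \<pi> p \<in> Z0 d" for p
  proof -
    assume p: "p \<in> {..d} \<times> A"
    then obtain i u where iu: "p = (i, u)" "i \<le> d" "u \<in> A" by auto
    then have ul: "u \<in> layer d T" using A by auto
    show ?thesis using iu ul unfolding Z0_def \<pi>_def layer_iff
      by (auto simp: rank_add rank_diff rank_unitv rank_vt) (auto simp: unitv_def vt_def)
  qed
  have "0 \<le> (\<Sum>p\<in>{..d} \<times> A. \<Sum>p'\<in>{..d} \<times> A. c' p * c' p' * F t (\<pi> p - \<pi> p'))"
    using A(1) P by (intro pd) auto
  also have "\<dots> = (\<Sum>i\<le>d. \<Sum>u\<in>A. \<Sum>j\<le>d. \<Sum>v\<in>A. c u * c v * F t (u - v - unitv i + unitv j))"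
    unfolding sum_times by (simp add: c'_def \<pi>_def algebra_simps)
  also have "\<dots> = (\<Sum>u\<in>A. \<Sum>v\<in>A. \<Sum>i\<le>d. \<Sum>j\<le>d. c u * c v * F t (u - v - unitv i + unitv j))"
    by (rule swap4[symmetric])
  finally have pos: "0 \<le> (\<Sum>u\<in>A. \<Sum>v\<in>A. c u * c v * (\<Sum>i\<le>d. \<Sum>j\<le>d. F t (u - v - unitv i + unitv j)))"
    by (simp add: sum_distrib_left)
  have "QF d a (Suc t) A c = a\<^sup>2 * (\<Sum>u\<in>A. \<Sum>v\<in>A. c u * c v * (\<Sum>i\<le>d. \<Sum>j\<le>d. F t (u - v - unitv i + unitv j)))
      + a\<^sup>2 * real (Suc d) * (\<Sum>u\<in>A. \<Sum>v\<in>A. c u * c v * (if u = v then 1 else 0))"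
    unfolding QF_def by (simp add: sum_distrib_left sum.distrib algebra_simps)
  also have "(\<Sum>u\<in>A. \<Sum>v\<in>A. c u * c v * (if u = v then 1 else 0)) = (\<Sum>u\<in>A. (c u)\<^sup>2)"
    using A(1) by (simp add: power2_eq_square if_distrib cong: if_cong)
  finally have eq: "QF d a (Suc t) A c = a\<^sup>2 * (\<Sum>u\<in>A. \<Sum>v\<in>A. c u * c v * (\<Sum>i\<le>d. \<Sum>j\<le>d. F t (u - v - unitv i + unitv j)))
      + a\<^sup>2 * real (Suc d) * (\<Sum>u\<in>A. (c u)\<^sup>2)" .
  have "0 \<le> a\<^sup>2 * (\<Sum>u\<in>A. \<Sum>v\<in>A. c u * c v * (\<Sum>i\<le>d. \<Sum>j\<le>d. F t (u - v - unitv i + unitv j)))"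
    by (rule mult_nonneg_nonneg[OF zero_le_power2 pos])
  then show ?thesis unfolding eq by linarith
qed

end

definition sabs :: "nat \<Rightarrow> (nat \<Rightarrow> int) \<Rightarrow> int" where
  "sabs d x = (\<Sum>k\<le>d. \<bar>x k\<bar>)"

context gm2
begin

lemma F_rec0: "F (Suc t) 0 = a\<^sup>2 * ((\<Sum>i\<le>d. \<Sum>j\<le>d. F t (unitv j - unitv i)) + real (Suc d))"
  by (simp add: algebra_simps)

lemma Fstep_b1:
  assumes b1: "b = 1" and ij: "i \<le> d" "j \<le> d"
  shows "F t 0 - F t (unitv j - unitv i) \<le> real (Suc d)"
proof -
  define D' where "D' = real (Suc d)"
  have aD: "a\<^sup>2 * D'\<^sup>2 = 1" using b1 unfolding D'_def by (simp add: power_mult_distrib[symmetric])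
  define T where "T i j = F t 0 - F t (unitv j - unitv i)" for i j
  have Tnn: "i \<le> d \<Longrightarrow> j \<le> d \<Longrightarrow> 0 \<le> T i j" for i j
    unfolding T_def using F_le0[OF Z0_step] by simp
  have "D'\<^sup>2 * F (Suc t) 0 = (\<Sum>i\<le>d. \<Sum>j\<le>d. F t (unitv j - unitv i)) + D'"
    unfolding F_rec0 D'_def[symmetric] using aD by (simp add: algebra_simps)
  moreover have "(\<Sum>i\<le>d. \<Sum>j\<le>d. T i j) = D'\<^sup>2 * F t 0 - (\<Sum>i\<le>d. \<Sum>j\<le>d. F t (unitv j - unitv i))"
    unfolding T_def D'_def by (simp add: sum_subtractf power2_eq_square)
  moreover have "F t 0 \<le> F (Suc t) 0" by (rule F_mono)
  moreover have "0 \<le> D'\<^sup>2" by simp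
  ultimately have sumT: "(\<Sum>i\<le>d. \<Sum>j\<le>d. T i j) \<le> D'"
    by (smt (verit, best) mult_left_mono)
  have "T i j \<le> (\<Sum>j\<le>d. T i j)" using ij Tnn by (intro member_le_sum) auto
  also have "\<dots> \<le> (\<Sum>i\<le>d. \<Sum>j\<le>d. T i j)" using ij Tnn by (intro member_le_sum sum_nonneg) auto
  finally show ?thesis using sumT unfolding T_def D'_def by simp
qed

lemma D_chain:
  assumes B: "0 \<le> B" and step: "\<And>i j. i \<le> d \<Longrightarrow> j \<le> d \<Longrightarrow> F t 0 - F t (unitv i - unitv j) \<le> B"
  shows "x \<in> Z0 d \<Longrightarrow> F t 0 - F t x \<le> 4 ^ nat (sabs d x) * B"
proof (induction "nat (sabs d x)" arbitrary: x rule: less_induct)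
  case less
  note x = less.prems
  show ?case
  proof (cases "x = 0")
    case True then show ?thesis using B by simp
  next
    case False
    have sup: "\<forall>k>d. x k = 0" and rk: "(\<Sum>k\<le>d. x k) = 0" using x unfolding Z0_def rank_def by auto
    obtain k0 where k0: "x k0 \<noteq> 0" using False by (auto simp: fun_eq_iff)
    have k0d: "k0 \<le> d" using k0 sup by (meson not_le)
    have "\<exists>i\<le>d. x i > 0"
    proof (rule ccontr)
      assume "\<not> ?thesis"
      then have "\<forall>k\<in>{..d}. 0 \<le> - x k" by auto
      moreover have "(\<Sum>k\<le>d. - x k) = 0" using rk by (simp add: sum_negf)
      ultimately have "\<forall>k\<in>{..d}. - x k = 0" using sum_nonneg_eq_0_iff[of "{..d}" "\<lambda>k. - x k"] by auto
      then show False using k0 k0d by auto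
    qed
    then obtain i where i: "i \<le> d" "x i > 0" by auto
    have "\<exists>j\<le>d. x j < 0"
    proof (rule ccontr)
      assume "\<not> ?thesis"
      then have "\<forall>k\<in>{..d}. 0 \<le> x k" by (auto simp: not_less)
      then have "\<forall>k\<in>{..d}. x k = 0" using sum_nonneg_eq_0_iff[of "{..d}" x] rk by auto
      then show False using k0 k0d by auto
    qed
    then obtain j where j: "j \<le> d" "x j < 0" by auto
    have ij: "i \<noteq> j" using i j by auto
    define s where "s = unitv i - unitv j"
    define y where "y = x - s"
    have sZ: "s \<in> Z0 d" unfolding s_def using Z0_step i j by auto
    have yZ: "y \<in> Z0 d" unfolding y_def using Z0_diff[OF x sZ] .
    have xy: "x = y + s" unfolding y_def by simp
    have yk: "y k = x k - (if k = i then 1 else 0) + (if k = j then 1 else 0)" for k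
      unfolding y_def s_def unitv_def by simp
    have lt: "sabs d y < sabs d x" unfolding sabs_def
    proof (rule sum_strict_mono_ex1)
      show "\<forall>k\<in>{..d}. \<bar>y k\<bar> \<le> \<bar>x k\<bar>" using i j ij by (auto simp: yk)
      show "\<exists>k\<in>{..d}. \<bar>y k\<bar> < \<bar>x k\<bar>" using i ij by (auto simp: yk intro!: bexI[of _ i])
    qed simp
    have y0: "0 \<le> sabs d y" unfolding sabs_def by (simp add: sum_nonneg)
    have ny: "nat (sabs d y) < nat (sabs d x)"
      using lt y0 by (simp add: nat_less_eq_zless)
    have IH: "F t 0 - F t y \<le> 4 ^ nat (sabs d y) * B" using less.hyps[OF ny yZ] .
    have Ds: "F t 0 - F t s \<le> B" unfolding s_def using step i j by auto
    have "F t 0 - F t x \<le> 2 * (F t 0 - F t y) + 2 * (F t 0 - F t s)"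
      unfolding xy by (rule D_tri[OF yZ sZ])
    also have "\<dots> \<le> 2 * (4 ^ nat (sabs d y) * B) + 2 * B" using IH Ds by simp
    also have "\<dots> \<le> 4 ^ nat (sabs d x) * B"
    proof -
      obtain m where m: "nat (sabs d x) = Suc m" using ny by (cases "nat (sabs d x)") auto
      have "(4::real) ^ nat (sabs d y) \<le> 4 ^ m" using ny m by (intro power_increasing) auto
      then have "2 * (4 ^ nat (sabs d y) * B) \<le> 2 * (4 ^ m * B)" using B by (simp add: mult_right_mono)
      moreover have "(1::real) \<le> 4 ^ m" by simp
      then have "1 * B \<le> 4 ^ m * B" using B by (rule mult_right_mono)
      then have "2 * B \<le> 2 * (4 ^ m * B)" by simp
      ultimately show ?thesis unfolding m by simp
    qed
    finally show ?thesis .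
  qed
qed

lemma F_bound_b_gt1:
  assumes b1: "b > 1"
  defines "K \<equiv> a\<^sup>2 * real (Suc d) / (b\<^sup>2 - 1)"
  shows "F t 0 \<le> K * (b ^ (2 * t) - 1)"
proof (induction t)
  case 0 then show ?case by simp
next
  case (Suc t)
  have "1 < b\<^sup>2" using one_less_power[OF b1, of 2] by simp
  then have ne: "b\<^sup>2 - 1 \<noteq> 0" by simp
  have K: "K * (b\<^sup>2 - 1) = a\<^sup>2 * real (Suc d)" unfolding K_def using ne by simp
  have "(\<Sum>i\<le>d. \<Sum>j\<le>d. F t (unitv j - unitv i)) \<le> (\<Sum>i\<le>d. \<Sum>j\<le>d. F t 0)"
    using F_le0[OF Z0_step] by (intro sum_mono) auto
  also have "\<dots> = real (Suc d) ^ 2 * F t 0" by (simp add: power2_eq_square)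
  finally have "F (Suc t) 0 \<le> a\<^sup>2 * (real (Suc d) ^ 2 * F t 0 + real (Suc d))"
    unfolding F_rec0 by (intro mult_left_mono) auto
  also have "\<dots> \<le> a\<^sup>2 * (real (Suc d) ^ 2 * (K * (b ^ (2 * t) - 1)) + real (Suc d))"
  proof -
    have "real (Suc d) ^ 2 * F t 0 \<le> real (Suc d) ^ 2 * (K * (b ^ (2 * t) - 1))"
      by (rule mult_left_mono[OF Suc.IH]) simp
    then show ?thesis by (intro mult_left_mono add_right_mono) simp_all
  qed
  also have "\<dots> = (a\<^sup>2 * real (Suc d) ^ 2) * K * b ^ (2 * t) - K * (a\<^sup>2 * real (Suc d) ^ 2) + a\<^sup>2 * real (Suc d)"
    by (simp only: distrib_left right_diff_distrib mult_ac mult_1_right)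
  also have "\<dots> = b\<^sup>2 * K * b ^ (2 * t) - K * b\<^sup>2 + a\<^sup>2 * real (Suc d)"
  proof -
    have ab: "a\<^sup>2 * real (Suc d) ^ 2 = b\<^sup>2" by (simp only: power_mult_distrib)
    show ?thesis by (simp only: ab)
  qed
  also have "\<dots> = K * (b ^ (2 * Suc t) - 1)"
  proof -
    have pw: "b ^ (2 * Suc t) = b\<^sup>2 * b ^ (2 * t)" by (simp add: power2_eq_square mult.assoc)
    show ?thesis unfolding K[symmetric] pw by (simp add: algebra_simps)
  qed
  finally show ?case .
qed

end

lemma window_fin:
  shows "finite (window d y N)" "card (window d y N) \<le> N ^ Suc d"
proof -
  define f where "f v = restrict v {..d}" for v :: "nat \<Rightarrow> int"
  define P where "P = (\<Pi>\<^sub>E i\<in>{..d}. {y i..<y i + int N})"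
  have inj: "inj_on f (window d y N)"
  proof (rule inj_onI)
    fix v w assume v: "v \<in> window d y N" and w: "w \<in> window d y N" and e: "f v = f w"
    show "v = w"
    proof
      fix i show "v i = w i"
      proof (cases "i \<le> d")
        case True then show ?thesis using e unfolding f_def by (metis atMost_iff restrict_apply')
      next
        case False then show ?thesis using v w unfolding window_def HS_def by auto
      qed
    qed
  qed
  have sub: "f ` window d y N \<subseteq> P"
  proof (rule image_subsetI)
    fix v assume "v \<in> window d y N"
    then show "f v \<in> P" unfolding f_def P_def restrict_PiE_iff window_def by auto
  qed
  have finP: "finite P" unfolding P_def by (intro finite_PiE) auto
  have cardP: "card P = N ^ Suc d" unfolding P_def by (simp add: card_PiE)
  show "finite (window d y N)" using finite_imageD[OF finite_subset[OF sub finP] inj] .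
  show "card (window d y N) \<le> N ^ Suc d" using card_inj_on_le[OF inj sub finP] cardP by simp
qed

lemma window_sabs:
  assumes "u \<in> window d y N" "v \<in> window d y N"
  shows "sabs d (u - v) \<le> int (Suc d * N)"
proof -
  have "sabs d (u - v) \<le> (\<Sum>k\<le>d. int N)" unfolding sabs_def
  proof (intro sum_mono)
    fix k assume "k \<in> {..d}"
    then have "y k \<le> u k \<and> u k < y k + int N" "y k \<le> v k \<and> v k < y k + int N"
      using assms unfolding window_def by auto
    then show "\<bar>(u - v) k\<bar> \<le> int N" by auto
  qed
  then show ?thesis by (simp add: algebra_simps)
qed

lemma corr_data:
  fixes V B S Q e :: real
  assumes V: "0 < V" "V = B\<^sup>2 * S\<^sup>2 + Q" and e: "0 < e" "e \<le> \<bar>B * S / sqrt V\<bar>"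
  shows "S \<noteq> 0" "e\<^sup>2 * Q \<le> B\<^sup>2 * S\<^sup>2"
proof -
  show "S \<noteq> 0" using e by auto
  have "e\<^sup>2 \<le> (\<bar>B * S / sqrt V\<bar>)\<^sup>2" using e by (intro power_mono) auto
  also have "\<dots> = B\<^sup>2 * S\<^sup>2 / V" using V(1) by (simp add: power_divide power_mult_distrib)
  finally have "e\<^sup>2 * V \<le> B\<^sup>2 * S\<^sup>2" using V(1) by (simp add: pos_le_divide_eq)
  moreover have "0 \<le> e\<^sup>2 * (B\<^sup>2 * S\<^sup>2)" by simp
  moreover have "e\<^sup>2 * V = e\<^sup>2 * (B\<^sup>2 * S\<^sup>2) + e\<^sup>2 * Q" using V(2) by (simp add: algebra_simps)
  ultimately show "e\<^sup>2 * Q \<le> B\<^sup>2 * S\<^sup>2" by linarith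
qed

context gm2
begin

lemma fresh_S:
  assumes A: "finite A" "A \<subseteq> layer d (Suc t)" "card A \<le> n" "0 < n"
  shows "a\<^sup>2 * real (Suc d) * (sum c A)\<^sup>2 \<le> real n * QF d a (Suc t) A c"
proof -
  have "(sum c A)\<^sup>2 \<le> (\<Sum>u\<in>A. (c u)\<^sup>2) * card A" by (rule sum_squared_le_sum_of_squares)
  also have "\<dots> \<le> (\<Sum>u\<in>A. (c u)\<^sup>2) * n" using A by (intro mult_left_mono) (auto intro: sum_nonneg)
  finally have 1: "(sum c A)\<^sup>2 \<le> (\<Sum>u\<in>A. (c u)\<^sup>2) * n" .
  have 2: "a\<^sup>2 * real (Suc d) * (\<Sum>u\<in>A. (c u)\<^sup>2) \<le> QF d a (Suc t) A c" by (rule fresh[OF A(1,2)])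
  have "a\<^sup>2 * real (Suc d) * (sum c A)\<^sup>2 \<le> a\<^sup>2 * real (Suc d) * ((\<Sum>u\<in>A. (c u)\<^sup>2) * n)"
    using 1 by (intro mult_left_mono) auto
  also have "\<dots> = real n * (a\<^sup>2 * real (Suc d) * (\<Sum>u\<in>A. (c u)\<^sup>2))" by simp
  also have "\<dots> \<le> real n * QF d a (Suc t) A c" using 2 by (intro mult_left_mono) auto
  finally show ?thesis .
qed

lemma cs_pd:
  assumes A: "finite A" "A \<subseteq> layer d t" "v0 \<in> A" and F0: "0 < F t 0"
  shows "(\<Sum>u\<in>A. c u * F t (u - v0))\<^sup>2 \<le> QF d a t A c * F t 0"
proof -
  define B' where "B' = (\<Sum>u\<in>A. c u * F t (u - v0))"
  define \<mu> where "\<mu> = B' / F t 0"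
  define \<pi> where "\<pi> j = (case j of None \<Rightarrow> v0 - vt t | Some u \<Rightarrow> u - vt t)" for j
  define c' where "c' j = (case j of None \<Rightarrow> - \<mu> | Some u \<Rightarrow> c u)" for j
  have v0l: "v0 \<in> layer d t" using A by auto
  have P: "\<And>j. j \<in> insert None (Some ` A) \<Longrightarrow> \<pi> j \<in> Z0 d"
    using A layer_diff_Z0[OF _ vt_layer] unfolding \<pi>_def by auto
  have "0 \<le> (\<Sum>j\<in>insert None (Some ` A). \<Sum>j'\<in>insert None (Some ` A). c' j * c' j' * F t (\<pi> j - \<pi> j'))"
    using A(1) P by (intro pd) auto
  also have "\<dots> = \<mu>\<^sup>2 * F t 0 - \<mu> * (\<Sum>u\<in>A. c u * F t (v0 - u)) - \<mu> * (\<Sum>u\<in>A. c u * F t (u - v0))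
      + QF d a t A c"
    using A(1) unfolding QF_def
    by (simp add: sum.reindex c'_def \<pi>_def sum.distrib sum_distrib_left algebra_simps power2_eq_square sum_subtractf sum_negf)
  also have "(\<Sum>u\<in>A. c u * F t (v0 - u)) = B'"
    unfolding B'_def
  proof (intro sum.cong refl)
    fix u assume "u \<in> A"
    then have "u - v0 \<in> Z0 d" using A v0l by (intro layer_diff_Z0) auto
    then show "c u * F t (v0 - u) = c u * F t (u - v0)" using F_sym[of "u - v0" t] by simp
  qed
  finally have "0 \<le> \<mu>\<^sup>2 * F t 0 - \<mu> * B' - \<mu> * B' + QF d a t A c" unfolding B'_def[symmetric] .
  then have "0 \<le> \<mu>\<^sup>2 * F t 0 - 2 * \<mu> * B' + QF d a t A c" by linarith
  also have "\<mu>\<^sup>2 * F t 0 - 2 * \<mu> * B' = - B'\<^sup>2 / F t 0" unfolding \<mu>_def using F0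
    by (simp add: field_simps power2_eq_square)
  finally have "B'\<^sup>2 / F t 0 \<le> QF d a t A c" by simp
  then show ?thesis unfolding B'_def[symmetric] using F0 by (simp add: pos_divide_le_eq)
qed

lemma b1_bound:
  assumes b1: "b = 1"
    and A: "finite A" "A \<subseteq> layer d (Suc t)" "A \<subseteq> window d y N" "v0 \<in> A" "card A \<le> n" "0 < n"
    and e: "0 < e" "e\<^sup>2 * QF d a (Suc t) A c \<le> (sum c A)\<^sup>2" "sum c A \<noteq> 0"
  shows "F (Suc t) 0 \<le> max (2 * (sqrt (real n * real (Suc d)) / e) * (4 ^ (Suc d * N) * real (Suc d))) (4 / e\<^sup>2)"
proof (rule ccontr)
  define T where "T = Suc t"
  define R where "R = sqrt (real n * real (Suc d)) / e"
  define Dm where "Dm = (4::real) ^ (Suc d * N) * real (Suc d)"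
  define S where "S = sum c A"
  define Q where "Q = QF d a T A c"
  define F0 where "F0 = F T 0"
  assume "\<not> ?thesis"
  then have big: "F0 > 2 * R * Dm" "F0 > 4 / e\<^sup>2" unfolding F0_def T_def R_def Dm_def by auto
  have R0: "0 \<le> R" unfolding R_def using e by simp
  have Dm0: "0 \<le> Dm" unfolding Dm_def by simp
  have "0 < 4 / e\<^sup>2" using e(1) by simp
  then have F0pos: "0 < F0" using big(2) by linarith
  have S2: "0 < S\<^sup>2" using e(3) unfolding S_def by simp
  have eQ: "e\<^sup>2 * Q \<le> S\<^sup>2" using e(2) unfolding Q_def S_def T_def .
  have ad: "a\<^sup>2 * real (Suc d) * real (Suc d) = 1"
  proof -
    have "a\<^sup>2 * real (Suc d) * real (Suc d) = (a * real (Suc d))\<^sup>2" by (simp add: power2_eq_square)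
    then show ?thesis using b1 by simp
  qed
  have fr: "a\<^sup>2 * real (Suc d) * (\<Sum>u\<in>A. (c u)\<^sup>2) \<le> Q"
    unfolding Q_def T_def by (rule fresh[OF A(1,2)])
  have sq: "(\<Sum>u\<in>A. (c u)\<^sup>2) \<le> real (Suc d) * Q"
  proof -
    have "real (Suc d) * (a\<^sup>2 * real (Suc d) * (\<Sum>u\<in>A. (c u)\<^sup>2)) = (a\<^sup>2 * real (Suc d) * real (Suc d)) * (\<Sum>u\<in>A. (c u)\<^sup>2)"
      by (simp only: mult_ac)
    then have "(\<Sum>u\<in>A. (c u)\<^sup>2) = real (Suc d) * (a\<^sup>2 * real (Suc d) * (\<Sum>u\<in>A. (c u)\<^sup>2))"
      unfolding ad by simp
    also have "\<dots> \<le> real (Suc d) * Q" using fr by (intro mult_left_mono) auto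
    finally show ?thesis .
  qed
  have "(\<Sum>u\<in>A. \<bar>c u\<bar>)\<^sup>2 \<le> (\<Sum>u\<in>A. (\<bar>c u\<bar>)\<^sup>2) * card A" by (rule sum_squared_le_sum_of_squares)
  also have "\<dots> = (\<Sum>u\<in>A. (c u)\<^sup>2) * card A" by simp
  also have "\<dots> \<le> (\<Sum>u\<in>A. (c u)\<^sup>2) * n" using A by (intro mult_left_mono) (auto intro: sum_nonneg)
  also have "\<dots> \<le> real (Suc d) * Q * n" using sq by (intro mult_right_mono) auto
  also have "\<dots> \<le> real (Suc d) * (S\<^sup>2 / e\<^sup>2) * n"
  proof -
    have "Q \<le> S\<^sup>2 / e\<^sup>2" using eQ e(1) by (simp add: pos_le_divide_eq mult.commute)
    then have "real (Suc d) * Q \<le> real (Suc d) * (S\<^sup>2 / e\<^sup>2)" by (rule mult_left_mono) simp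
    then show ?thesis by (rule mult_right_mono) simp
  qed
  also have "\<dots> = (R * \<bar>S\<bar>)\<^sup>2"
  proof -
    have "R\<^sup>2 = (sqrt (real n * real (Suc d)))\<^sup>2 / e\<^sup>2" unfolding R_def by (rule power_divide)
    also have "(sqrt (real n * real (Suc d)))\<^sup>2 = real n * real (Suc d)" by (rule real_sqrt_pow2) simp
    finally have R2: "R\<^sup>2 = real n * real (Suc d) / e\<^sup>2" .
    have "(R * \<bar>S\<bar>)\<^sup>2 = R\<^sup>2 * S\<^sup>2" by (simp add: power_mult_distrib)
    then show ?thesis unfolding R2 by simp
  qed
  finally have l1: "(\<Sum>u\<in>A. \<bar>c u\<bar>) \<le> R * \<bar>S\<bar>"
    by (rule power2_le_imp_le) (use R0 in simp)
  have v0l: "v0 \<in> layer d T" using A unfolding T_def by auto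
  have Dbd: "0 \<le> F0 - F T (u - v0) \<and> F0 - F T (u - v0) \<le> Dm" if u: "u \<in> A" for u
  proof -
    have ul: "u \<in> layer d T" using A u unfolding T_def by auto
    have Z: "u - v0 \<in> Z0 d" by (rule layer_diff_Z0[OF ul v0l])
    have "F T 0 - F T (u - v0) \<le> 4 ^ nat (sabs d (u - v0)) * real (Suc d)"
      using Fstep_b1[OF b1] by (intro D_chain[OF _ _ Z]) auto
    also have "\<dots> \<le> Dm" unfolding Dm_def
    proof (intro mult_right_mono power_increasing)
      have "sabs d (u - v0) \<le> int (Suc d * N)" using window_sabs[of u d y N v0] A u by auto
      then show "nat (sabs d (u - v0)) \<le> Suc d * N" by (simp add: nat_le_iff)
    qed auto
    finally show ?thesis using F_le0[OF Z] unfolding F0_def by simp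
  qed
  define B' where "B' = (\<Sum>u\<in>A. c u * F T (u - v0))"
  have B'eq: "B' = S * F0 - (\<Sum>u\<in>A. c u * (F0 - F T (u - v0)))"
    unfolding B'_def S_def by (simp add: sum_subtractf sum_distrib_right sum_distrib_left algebra_simps)
  have "\<bar>\<Sum>u\<in>A. c u * (F0 - F T (u - v0))\<bar> \<le> (\<Sum>u\<in>A. \<bar>c u\<bar> * Dm)"
  proof -
    have "\<bar>\<Sum>u\<in>A. c u * (F0 - F T (u - v0))\<bar> \<le> (\<Sum>u\<in>A. \<bar>c u * (F0 - F T (u - v0))\<bar>)"
      by (rule sum_abs)
    also have "\<dots> \<le> (\<Sum>u\<in>A. \<bar>c u\<bar> * Dm)"
    proof (intro sum_mono)
      fix u assume "u \<in> A"
      then show "\<bar>c u * (F0 - F T (u - v0))\<bar> \<le> \<bar>c u\<bar> * Dm"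
        using Dbd[of u] unfolding abs_mult by (intro mult_left_mono) auto
    qed
    finally show ?thesis .
  qed
  also have "\<dots> = (\<Sum>u\<in>A. \<bar>c u\<bar>) * Dm" by (simp add: sum_distrib_right)
  also have "\<dots> \<le> R * \<bar>S\<bar> * Dm" using l1 Dm0 by (intro mult_right_mono) auto
  finally have err: "\<bar>\<Sum>u\<in>A. c u * (F0 - F T (u - v0))\<bar> \<le> R * \<bar>S\<bar> * Dm" .
  have "\<bar>S\<bar> * F0 / 2 \<le> \<bar>B'\<bar>"
  proof -
    have "\<bar>S\<bar> * (2 * R * Dm) \<le> \<bar>S\<bar> * F0" using big(1) by (intro mult_left_mono) auto
    moreover have "2 * (R * \<bar>S\<bar> * Dm) = \<bar>S\<bar> * (2 * R * Dm)" by (simp add: mult_ac)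
    moreover have "\<bar>S * F0\<bar> - \<bar>\<Sum>u\<in>A. c u * (F0 - F T (u - v0))\<bar> \<le> \<bar>B'\<bar>"
      unfolding B'eq by (rule abs_triangle_ineq2)
    moreover have "\<bar>S * F0\<bar> = \<bar>S\<bar> * F0" using F0pos by (simp add: abs_mult)
    ultimately show ?thesis using err by linarith
  qed
  then have "(\<bar>S\<bar> * F0 / 2)\<^sup>2 \<le> (\<bar>B'\<bar>)\<^sup>2" using F0pos by (intro power_mono) auto
  also have "(\<bar>B'\<bar>)\<^sup>2 = B'\<^sup>2" by simp
  also have "B'\<^sup>2 \<le> Q * F0" unfolding B'_def Q_def F0_def
    using cs_pd[OF A(1) A(2)[folded T_def] A(4) F0pos[unfolded F0_def]] .
  finally have "(\<bar>S\<bar> * F0 / 2)\<^sup>2 \<le> Q * F0" .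
  moreover have "(\<bar>S\<bar> * F0 / 2)\<^sup>2 = (S\<^sup>2 * F0 / 4) * F0" by (simp add: power2_eq_square)
  ultimately have "(S\<^sup>2 * F0 / 4) * F0 \<le> Q * F0" by simp
  then have "S\<^sup>2 * F0 / 4 \<le> Q" using F0pos by (simp only: mult_le_cancel_right_pos)
  then have "e\<^sup>2 * (S\<^sup>2 * F0 / 4) \<le> e\<^sup>2 * Q" by (intro mult_left_mono) auto
  then have "e\<^sup>2 * (S\<^sup>2 * F0 / 4) \<le> S\<^sup>2" using eQ by linarith
  then have "S\<^sup>2 * (e\<^sup>2 * F0 / 4) \<le> S\<^sup>2 * 1" by (simp add: algebra_simps)
  then have "e\<^sup>2 * F0 / 4 \<le> 1" using S2 by (simp add: mult_le_cancel_left_pos)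
  then have "F0 \<le> 4 / e\<^sup>2" using e(1) by (simp add: field_simps)
  then show False using big(2) by simp
qed

end

context gm2
begin

lemma single_fail_growth:
  assumes ns: "\<not> single_vertex_reconstruction M d \<alpha> X0 W" and K: "0 \<le> K"
  shows "\<exists>T. \<forall>t\<ge>T. K * b ^ (2 * t) < F t 0"
proof -
  define c0 where "c0 u = (if u \<in> range vt then 1 else (0::real))" for u
  have Aeq: "{u \<in> layer d t. c0 u \<noteq> 0} = {vt t}" for t
  proof (intro set_eqI iffI)
    fix u assume "u \<in> {u \<in> layer d t. c0 u \<noteq> 0}"
    then obtain s where "u = vt s" "u \<in> layer d t" unfolding c0_def by (auto split: if_splits)
    then show "u \<in> {vt t}" using rank_vt[of d s] unfolding layer_iff by auto
  next
    fix u assume "u \<in> {vt t}" then show "u \<in> {u \<in> layer d t. c0 u \<noteq> 0}"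
      using vt_layer unfolding c0_def by auto
  qed
  have b0: "0 < b" using apos by simp
  have V: "var M (zeta d \<alpha> X0 W c0 t) = b ^ (2 * t) + F t 0" for t
    using corr_formula(1)[of t c0] unfolding Aeq by (simp add: QF_def c0_def)
  have C: "corr M (zeta d \<alpha> X0 W c0 t) X0 = b ^ t / sqrt (b ^ (2 * t) + F t 0)" for t
    using corr_formula(2)[of t c0] unfolding Aeq by (simp add: QF_def c0_def)
  have Vpos: "0 < b ^ (2 * t) + F t 0" for t using b0 F0_nonneg[of t] by (simp add: add_pos_nonneg)
  have win: "\<forall>t. \<forall>u\<in>layer d t. c0 u \<noteq> 0 \<longrightarrow> u \<in> window d (vt t) 1"
  proof (intro allI ballI impI)
    fix t u assume "u \<in> layer d t" "c0 u \<noteq> 0"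
    then have "u = vt t" using Aeq[of t] by auto
    then show "u \<in> window d (vt t) 1" using vt_layer[of t d] unfolding window_def layer_def by auto
  qed
  have vp: "\<forall>t. var M (zeta d \<alpha> X0 W c0 t) > 0" using V Vpos by simp
  have "\<not> ((\<forall>t. \<forall>u\<in>layer d t. c0 u \<noteq> 0 \<longrightarrow> u \<in> window d (vt t) 1) \<and>
        (\<forall>t. var M (zeta d \<alpha> X0 W c0 t) > 0) \<and>
        \<not> ((\<lambda>t. corr M (zeta d \<alpha> X0 W c0 t) X0) \<longlonglongrightarrow> 0))"
    using ns unfolding single_vertex_reconstruction_def recon_width_def by blast
  then have lim: "(\<lambda>t. corr M (zeta d \<alpha> X0 W c0 t) X0) \<longlonglongrightarrow> 0" using win vp by blast
  have q: "0 < 1 / sqrt (1 + K)" using K by simp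
  have "eventually (\<lambda>t. corr M (zeta d \<alpha> X0 W c0 t) X0 < 1 / sqrt (1 + K)) sequentially"
    by (rule order_tendstoD(2)[OF lim q])
  then obtain T where T: "\<And>t. t \<ge> T \<Longrightarrow> b ^ t / sqrt (b ^ (2 * t) + F t 0) < 1 / sqrt (1 + K)"
    unfolding eventually_sequentially C by auto
  show ?thesis
  proof (intro exI allI impI)
    fix t assume "t \<ge> T"
    note lt = T[OF this]
    have p0: "0 \<le> b ^ t / sqrt (b ^ (2 * t) + F t 0)" using b0 Vpos[of t] by simp
    have "(b ^ t / sqrt (b ^ (2 * t) + F t 0))\<^sup>2 < (1 / sqrt (1 + K))\<^sup>2"
      by (rule power_strict_mono[OF lt p0]) simp
    moreover have "(b ^ t / sqrt (b ^ (2 * t) + F t 0))\<^sup>2 = b ^ (2 * t) / (b ^ (2 * t) + F t 0)"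
      using Vpos[of t] by (simp add: power_divide power_mult[symmetric] mult.commute)
    moreover have "(1 / sqrt (1 + K))\<^sup>2 = 1 / (1 + K)" using K by (simp add: power_divide)
    ultimately have "b ^ (2 * t) / (b ^ (2 * t) + F t 0) < 1 / (1 + K)" by simp
    then have "b ^ (2 * t) * (1 + K) < 1 * (b ^ (2 * t) + F t 0)"
      using Vpos[of t] K by (simp add: divide_less_eq field_simps)
    then show "K * b ^ (2 * t) < F t 0" by (simp add: algebra_simps)
  qed
qed

lemma local_implies_single:
  assumes loc: "local_reconstruction M d \<alpha> X0 W"
  shows "single_vertex_reconstruction M d \<alpha> X0 W"
proof (rule ccontr)
  assume ns: "\<not> single_vertex_reconstruction M d \<alpha> X0 W"
  have b0: "0 < b" using apos by simp
  obtain N x c where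
    win: "\<forall>t. \<forall>u\<in>layer d t. c u \<noteq> 0 \<longrightarrow> u \<in> window d (x t) N" and
    vpos: "\<forall>t. var M (zeta d \<alpha> X0 W c t) > 0" and
    nc: "\<not> ((\<lambda>t. corr M (zeta d \<alpha> X0 W c t) X0) \<longlonglongrightarrow> 0)"
    using loc unfolding local_reconstruction_def recon_width_def by blast
  define A where "A t = {u \<in> layer d t. c u \<noteq> 0}" for t
  define n where "n = N ^ Suc d"
  have Aw: "A t \<subseteq> window d (x t) N" for t using win unfolding A_def by blast
  have Afin: "finite (A t)" for t by (rule finite_subset[OF Aw window_fin(1)])
  have Acard: "card (A t) \<le> n" for t
    unfolding n_def by (rule le_trans[OF card_mono[OF window_fin(1) Aw] window_fin(2)])
  have Al: "A t \<subseteq> layer d t" for t unfolding A_def by auto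
  have "\<exists>r>0. \<forall>no. \<exists>n\<ge>no. r \<le> \<bar>corr M (zeta d \<alpha> X0 W c n) X0\<bar>"
    using nc unfolding LIMSEQ_iff by (simp add: not_less)
  then obtain e where e: "0 < e" "\<And>T. \<exists>t\<ge>T. e \<le> \<bar>corr M (zeta d \<alpha> X0 W c t) X0\<bar>"
    by blast
  have data: "sum c (A t) \<noteq> 0 \<and> e\<^sup>2 * QF d a t (A t) c \<le> b ^ (2 * t) * (sum c (A t))\<^sup>2 \<and> A t \<noteq> {} \<and> 0 < n"
    if et: "e \<le> \<bar>corr M (zeta d \<alpha> X0 W c t) X0\<bar>" for t
  proof -
    have fA: "finite {u \<in> layer d t. c u \<noteq> 0}" using Afin unfolding A_def .
    note cf = corr_formula[OF fA, folded A_def]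
    have V: "var M (zeta d \<alpha> X0 W c t) = (b ^ t)\<^sup>2 * (sum c (A t))\<^sup>2 + QF d a t (A t) c"
      using cf(1) by (simp add: power_mult[symmetric] mult.commute)
    have "e \<le> \<bar>b ^ t * sum c (A t) / sqrt (var M (zeta d \<alpha> X0 W c t))\<bar>"
      using et cf by simp
    note cd = corr_data[OF vpos[rule_format] V e(1) this]
    have ne: "A t \<noteq> {}" using cd(1) by auto
    then have "0 < card (A t)" using Afin by (simp add: card_gt_0_iff)
    then have "0 < n" using Acard[of t] by simp
    then show ?thesis using cd ne by (simp add: power_mult[symmetric] mult.commute)
  qed
  consider "b < 1" | "b = 1" | "b > 1" by linarith
  then show False
  proof cases
    case 1
    define L where "L = e\<^sup>2 * a\<^sup>2 * real (Suc d) / real n"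
    obtain t0 where "e \<le> \<bar>corr M (zeta d \<alpha> X0 W c t0) X0\<bar>" using e(2) by blast
    then have n0: "0 < n" using data by blast
    have Lpos: "0 < L" unfolding L_def using e(1) apos n0 by simp
    have bb: "b\<^sup>2 < 1" using power_strict_mono[of b 1 2] 1 b0 by simp
    have "(\<lambda>t. (b\<^sup>2) ^ t) \<longlonglongrightarrow> 0"
      by (rule LIMSEQ_power_zero) (use bb in simp)
    then have "eventually (\<lambda>t. (b\<^sup>2) ^ t < L) sequentially" by (rule order_tendstoD(2)[OF _ Lpos])
    then obtain T where T: "\<And>t. t \<ge> T \<Longrightarrow> (b\<^sup>2) ^ t < L" unfolding eventually_sequentially by auto
    obtain t where t: "t \<ge> Suc T" "e \<le> \<bar>corr M (zeta d \<alpha> X0 W c t) X0\<bar>" using e(2) by blast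
    obtain t' where t': "t = Suc t'" using t(1) by (cases t) auto
    note dt = data[OF t(2)]
    have fr: "a\<^sup>2 * real (Suc d) * (sum c (A t))\<^sup>2 \<le> real n * QF d a t (A t) c"
      unfolding t' by (rule fresh_S) (use Afin Al Acard dt in \<open>auto simp: t'\<close>)
    have S2: "0 < (sum c (A t))\<^sup>2" using dt by simp
    have "e\<^sup>2 * (a\<^sup>2 * real (Suc d) * (sum c (A t))\<^sup>2) \<le> e\<^sup>2 * (real n * QF d a t (A t) c)"
      using fr by (intro mult_left_mono) auto
    also have "\<dots> = real n * (e\<^sup>2 * QF d a t (A t) c)" by simp
    also have "\<dots> \<le> real n * (b ^ (2 * t) * (sum c (A t))\<^sup>2)" using dt by (intro mult_left_mono) auto
    finally have "(e\<^sup>2 * a\<^sup>2 * real (Suc d)) * (sum c (A t))\<^sup>2 \<le> (real n * b ^ (2 * t)) * (sum c (A t))\<^sup>2"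
      by (simp add: mult_ac)
    then have "e\<^sup>2 * a\<^sup>2 * real (Suc d) \<le> real n * b ^ (2 * t)" using S2 by (simp only: mult_le_cancel_right_pos)
    then have "L \<le> b ^ (2 * t)" unfolding L_def using n0 by (simp add: divide_le_eq mult.commute)
    moreover have "b ^ (2 * t) = (b\<^sup>2) ^ t" by (simp add: power_mult)
    moreover have "(b\<^sup>2) ^ t < L" using T t(1) by simp
    ultimately show False by simp
  next
    case 2
    define K where "K = max (2 * (sqrt (real n * real (Suc d)) / e) * (4 ^ (Suc d * N) * real (Suc d))) (4 / e\<^sup>2)"
    have K0: "0 \<le> K" unfolding K_def by (simp add: le_max_iff_disj)
    obtain T where T: "\<And>t. t \<ge> T \<Longrightarrow> K * b ^ (2 * t) < F t 0" using single_fail_growth[OF ns K0] by blast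
    obtain t where t: "t \<ge> Suc T" "e \<le> \<bar>corr M (zeta d \<alpha> X0 W c t) X0\<bar>" using e(2) by blast
    obtain t' where t': "t = Suc t'" using t(1) by (cases t) auto
    note dt = data[OF t(2)]
    obtain v0 where v0: "v0 \<in> A t" using dt by blast
    have "F (Suc t') 0 \<le> K" unfolding K_def
      by (rule b1_bound[where c=c, OF 2 Afin[of t, unfolded t'] Al[of t, unfolded t'] Aw[of t, unfolded t'] v0[unfolded t'] Acard[of t, unfolded t'] _ e(1)]) (use dt 2 in \<open>simp_all add: t'\<close>)
    moreover have "K < F t 0" using T[of t] t(1) 2 by simp
    ultimately show False unfolding t' by simp
  next
    case 3
    define K where "K = a\<^sup>2 * real (Suc d) / (b\<^sup>2 - 1)"
    have "1 < b\<^sup>2" using one_less_power[OF 3, of 2] by simp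
    then have K0: "0 \<le> K" unfolding K_def by simp
    obtain T where T: "\<And>t. t \<ge> T \<Longrightarrow> K * b ^ (2 * t) < F t 0" using single_fail_growth[OF ns K0] by blast
    have "F T 0 \<le> K * (b ^ (2 * T) - 1)" unfolding K_def by (rule F_bound_b_gt1[OF 3])
    also have "\<dots> \<le> K * b ^ (2 * T)" using K0 by (intro mult_left_mono) auto
    finally show False using T[of T] by simp
  qed
qed

end


theorem mainTheorem5:
  fixes M :: "'a measure" and d :: nat and \<alpha> :: "nat \<Rightarrow> real"
    and X0 :: "'a \<Rightarrow> real" and W :: "(nat \<Rightarrow> int) \<times> (nat \<Rightarrow> int) \<Rightarrow> 'a \<Rightarrow> real"
  assumes "\<alpha> (Suc d) > 0"
    and "gaussian_model M d X0 W"
  shows "local_reconstruction M d \<alpha> X0 W \<longleftrightarrow> single_vertex_reconstruction M d \<alpha> X0 W"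
proof -
  interpret gm2 M d X0 W \<alpha>
    by (intro gm2.intro gm.intro gm2_axioms.intro) (use assms in auto)
  show ?thesis
  proof
    assume "local_reconstruction M d \<alpha> X0 W"
    then show "single_vertex_reconstruction M d \<alpha> X0 W" by (rule local_implies_single)
  next
    assume "single_vertex_reconstruction M d \<alpha> X0 W"
    then show "local_reconstruction M d \<alpha> X0 W"
      unfolding local_reconstruction_def single_vertex_reconstruction_def by blast
  qed
qed

end
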